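(* Let $X$ be a paracompact $C$-space, $(Y,\rho)$ a metric space, and $\varphi:X\rightrightarrows Y$ a $\rho$-continuous mapping such that each $\varphi(x)$, $x\in X$, is uniformly $UV^\infty$ (i.e. CE). Then for every continuous function $\varepsilon:X\to(0,+\infty)$, $\varphi$ has a continuous $\varepsilon$-selection.
   Context: A space $X$ is a $C$-space if for every sequence $\{\mathscr{U}_n:n<\omega\}$ of open covers of $X$ there is a sequence $\{\mathscr{V}_n:n<\omega\}$ of families of pairwise disjoint open subsets of $X$ such that each $\mathscr{V}_n$ refines $\mathscr{U}_n$ and $\bigcup_n\mathscr{V}_n$ covers $X$. A set-valued mapping $\varphi:X\rightrightarrows Y$ assigns a nonempty subset $\varphi(x)\subset Y$ to each $x$. $\mathbf{O}_\varepsilon(S)=\bigcup_{q\in S}\{y:\rho(y,q)<\varepsilon\}$. $\varphi$ is $\rho$-continuous if for every $\varepsilon>0$ each $x\in X$ has a neighbourhood $V$ with $\varphi(x)\subset\mathbf{O}_\varepsilon(\varphi(p))$ and $\varphi(p)\subset\mathbf{O}_\varepsilon(\varphi(x))$ for all $p\in V$. A subset $S\subset Y$ is uniformly $UV^\infty$ (CE) if for every $\varepsilon>0$ there exists $\delta\in(0,\varepsilon]$ such that $\mathbf{O}_\delta(S)$ is contractible in $\mathbf{O}_\varepsilon(S)$ (the inclusion $\mathbf{O}_\delta(S)\to\mathbf{O}_\varepsilon(S)$ is homotopic to a constant map). A map $f:X\to Y$ is an $\varepsilon$-selection for $\varphi$ if $f(x)\in\mathbf{O}_{\varepsilon(x)}(\varphi(x))$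 for every $x\in X$. *)

theory Defs
  imports "HOL-Analysis.Analysis"
begin

text \<open>Paracompact (Engelking convention: Hausdorff, and every open cover has a
  locally finite open refinement).\<close>
definition paracompact_space :: "'a topology \<Rightarrow> bool" where
  "paracompact_space X \<longleftrightarrow> Hausdorff_space X \<and>
     (\<forall>\<U>. (\<forall>U\<in>\<U>. openin X U) \<and> topspace X \<subseteq> \<Union>\<U> \<longrightarrow>
        (\<exists>\<V>. (\<forall>V\<in>\<V>. openin X V) \<and> topspace X \<subseteq> \<Union>\<V> \<and>
              (\<forall>V\<in>\<V>. \<exists>U\<in>\<U>. V \<subseteq> U) \<and> locally_finite_in X \<V>))"

definition C_space :: "'a topology \<Rightarrow> bool" where
  "C_space X \<longleftrightarrow>
     (\<forall>\<U> :: nat \<Rightarrow> 'a set set.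
        (\<forall>n. (\<forall>U\<in>\<U> n. openin X U) \<and> topspace X \<subseteq> \<Union>(\<U> n)) \<longrightarrow>
        (\<exists>\<V> :: nat \<Rightarrow> 'a set set.
           (\<forall>n. (\<forall>V\<in>\<V> n. openin X V) \<and> pairwise disjnt (\<V> n) \<and>
                (\<forall>V\<in>\<V> n. \<exists>U\<in>\<U> n. V \<subseteq> U)) \<and>
           topspace X \<subseteq> (\<Union>n. \<Union>(\<V> n))))"

definition Onbhd :: "real \<Rightarrow> 'b::metric_space set \<Rightarrow> 'b set" where
  "Onbhd e S = (\<Union>q\<in>S. {y. dist y q < e})"

definition rho_continuous :: "'a topology \<Rightarrow> ('a \<Rightarrow> 'b::metric_space set) \<Rightarrow> bool" where
  "rho_continuous X \<phi> \<longleftrightarrow>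
     (\<forall>e>0. \<forall>x\<in>topspace X. \<exists>V. openin X V \<and> x \<in> V \<and>
        (\<forall>p\<in>V. \<phi> x \<subseteq> Onbhd e (\<phi> p) \<and> \<phi> p \<subseteq> Onbhd e (\<phi> x)))"

definition uniformly_UV_infty :: "'b::metric_space set \<Rightarrow> bool" where
  "uniformly_UV_infty S \<longleftrightarrow>
     (\<forall>e>0. \<exists>d. 0 < d \<and> d \<le> e \<and>
        (\<exists>c. homotopic_with_canon (\<lambda>_. True) (Onbhd d S) (Onbhd e S) id (\<lambda>_. c)))"

definition eps_selection ::
  "'a topology \<Rightarrow> ('a \<Rightarrow> real) \<Rightarrow> ('a \<Rightarrow> 'b::metric_space set) \<Rightarrow> ('a \<Rightarrow> 'b) \<Rightarrow> bool" where
  "eps_selection X \<epsilon> \<phi> f \<longleftrightarrow> (\<forall>x\<in>topspace X. f x \<in> Onbhd (\<epsilon> x) (\<phi> x))"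

end

theory Submission
  imports Defs
begin

lemma paracompactD:
  assumes P: "paracompact_space X" and o: "\<forall>U\<in>\<U>. openin X U" and c: "topspace X \<subseteq> \<Union>\<U>"
  obtains \<V> where "\<forall>V\<in>\<V>. openin X V" "topspace X \<subseteq> \<Union>\<V>"
     "\<forall>V\<in>\<V>. \<exists>U\<in>\<U>. V \<subseteq> U" "locally_finite_in X \<V>"
proof -
  have "(\<forall>U\<in>\<U>. openin X U) \<and> topspace X \<subseteq> \<Union>\<U> \<longrightarrow>
        (\<exists>\<V>. (\<forall>V\<in>\<V>. openin X V) \<and> topspace X \<subseteq> \<Union>\<V> \<and>
              (\<forall>V\<in>\<V>. \<exists>U\<in>\<U>. V \<subseteq> U) \<and> locally_finite_in X \<V>)"
    using P unfolding paracompact_space_def by (rule conjunct2[THEN spec])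
  then have "\<exists>\<V>. (\<forall>V\<in>\<V>. openin X V) \<and> topspace X \<subseteq> \<Union>\<V> \<and>
              (\<forall>V\<in>\<V>. \<exists>U\<in>\<U>. V \<subseteq> U) \<and> locally_finite_in X \<V>"
    using o c by (rule mp[OF _ conjI])
  then show ?thesis using that by (elim exE conjE)
qed

lemma sep_lemma:
  assumes P: "paracompact_space X" and C: "closedin X C"
    and H: "\<And>c. c \<in> C \<Longrightarrow> \<exists>U. openin X U \<and> c \<in> U \<and> disjnt D (X closure_of U)"
  shows "\<exists>U. openin X U \<and> C \<subseteq> U \<and> disjnt D (X closure_of U)"
proof -
  define \<U> where "\<U> = insert (topspace X - C) {U. openin X U \<and> disjnt D (X closure_of U)}"
  have oC: "openin X (topspace X - C)" using C closedin_def by blast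
  have o: "\<forall>U\<in>\<U>. openin X U"
    unfolding \<U>_def using oC by simp
  have cov: "topspace X \<subseteq> \<Union>\<U>"
  proof
    fix x assume x: "x \<in> topspace X"
    show "x \<in> \<Union>\<U>"
    proof (cases "x \<in> C")
      case True
      then obtain U where "openin X U \<and> x \<in> U \<and> disjnt D (X closure_of U)" using H by blast
      then show ?thesis unfolding \<U>_def by blast
    next
      case False then show ?thesis using x unfolding \<U>_def by blast
    qed
  qed
  obtain \<V> where V1: "\<forall>V\<in>\<V>. openin X V" and V2: "topspace X \<subseteq> \<Union>\<V>"
     and V3: "\<forall>V\<in>\<V>. \<exists>U\<in>\<U>. V \<subseteq> U" and V4: "locally_finite_in X \<V>"
    by (rule paracompactD[OF P o cov])
  define \<W> where "\<W> = {V\<in>\<V>. V \<inter> C \<noteq> {}}"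
  have lf: "locally_finite_in X \<W>" by (rule locally_finite_in_subset[OF V4]) (auto simp: \<W>_def)
  have op: "openin X (\<Union>\<W>)" using V1 unfolding \<W>_def by (intro openin_Union) simp
  have sub: "C \<subseteq> \<Union>\<W>"
  proof
    fix c assume c: "c \<in> C"
    then have "c \<in> topspace X" using closedin_subset[OF C] by (meson subsetD)
    with V2 obtain W where "W \<in> \<V>" "c \<in> W" by (meson UnionE subsetD)
    then show "c \<in> \<Union>\<W>" using c unfolding \<W>_def by blast
  qed
  have "disjnt D (X closure_of W)" if "W \<in> \<W>" for W
  proof -
    have W: "W \<in> \<V>" "W \<inter> C \<noteq> {}" using that unfolding \<W>_def by auto
    obtain U where "U \<in> \<U>" "W \<subseteq> U" using V3 W(1) by blast
    moreover have "U \<noteq> topspace X - C" using \<open>W \<subseteq> U\<close> W(2) by blast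
    ultimately have "disjnt D (X closure_of U)" unfolding \<U>_def by blast
    then show ?thesis using closure_of_mono[OF \<open>W \<subseteq> U\<close>, of X]
      by (meson disjnt_subset2)
  qed
  then have "disjnt D (X closure_of \<Union>\<W>)"
    unfolding closure_of_locally_finite_Union[OF lf] by (auto simp: disjnt_def)
  with op sub show ?thesis by blast
qed

lemma paracompact_regular:
  assumes P: "paracompact_space X"
  shows "regular_space X"
  unfolding regular_space_def
proof clarify
  fix C a assume C: "closedin X C" and a: "a \<in> topspace X" "a \<notin> C"
  have HS: "Hausdorff_space X" using P paracompact_space_def by blast
  have "\<exists>U. openin X U \<and> c \<in> U \<and> disjnt {a} (X closure_of U)" if "c \<in> C" for c
  proof -
    have "c \<in> topspace X" "c \<noteq> a" using that C closedin_subset a by auto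
    then obtain U V where "openin X U" "openin X V" "c \<in> U" "a \<in> V" "disjnt U V"
      using HS a unfolding Hausdorff_space_def by blast
    then have "a \<notin> X closure_of U"
      by (meson disjnt_iff in_closure_of)
    then show ?thesis using \<open>openin X U\<close> \<open>c \<in> U\<close> by (auto simp: disjnt_def)
  qed
  then obtain U where U: "openin X U" "C \<subseteq> U" "disjnt {a} (X closure_of U)"
    using sep_lemma[OF P C] by meson
  show "\<exists>U V. openin X U \<and> openin X V \<and> a \<in> U \<and> C \<subseteq> V \<and> disjnt U V"
  proof (intro exI conjI)
    show "openin X (topspace X - X closure_of U)" using closedin_closure_of closedin_def by blast
    show "a \<in> topspace X - X closure_of U" using a U by (auto simp: disjnt_def)
    show "disjnt (topspace X - X closure_of U) U"
      using closure_of_subset[of U X] U(1) openin_subset by (auto simp: disjnt_def)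
  qed (use U in blast)+
qed

lemma paracompact_normal:
  assumes P: "paracompact_space X"
  shows "normal_space X"
  unfolding normal_space
proof clarify
  fix S T assume S: "closedin X S" and T: "closedin X T" and d: "disjnt S T"
  have R: "regular_space X" using paracompact_regular[OF P] .
  have "\<exists>U. openin X U \<and> c \<in> U \<and> disjnt T (X closure_of U)" if "c \<in> S" for c
  proof -
    have "c \<in> topspace X - T" using that S closedin_subset d by (auto simp: disjnt_def)
    then show ?thesis using R T unfolding regular_space by (meson disjnt_sym)
  qed
  then show "\<exists>U. openin X U \<and> S \<subseteq> U \<and> disjnt T (X closure_of U)"
    using sep_lemma[OF P S] by meson
qed

lemma PU:
  fixes U :: "'i \<Rightarrow> 'a set"
  assumes P: "paracompact_space X" and o: "\<And>i. i \<in> I \<Longrightarrow> openin X (U i)"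
    and cov: "topspace X \<subseteq> (\<Union>i\<in>I. U i)"
  obtains \<kappa> :: "'i \<Rightarrow> 'a \<Rightarrow> real" and Ob :: "'i \<Rightarrow> 'a set" where
    "\<And>i. i\<in>I \<Longrightarrow> continuous_map X euclideanreal (\<kappa> i)"
    "\<And>i x. 0 \<le> \<kappa> i x \<and> \<kappa> i x \<le> 1"
    "\<And>i. i\<in>I \<Longrightarrow> openin X (Ob i)"
    "\<And>i x. i\<in>I \<Longrightarrow> x \<in> Ob i \<Longrightarrow> \<kappa> i x = 1"
    "topspace X \<subseteq> (\<Union>i\<in>I. Ob i)"
    "\<And>i x. i\<in>I \<Longrightarrow> x \<in> topspace X \<Longrightarrow> x \<notin> U i \<Longrightarrow> \<exists>N. openin X N \<and> x\<in>N \<and> (\<forall>p\<in>N. \<kappa> i p = 0)"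
    "\<And>x. x \<in> topspace X \<Longrightarrow> \<exists>N. openin X N \<and> x \<in> N \<and> finite {i\<in>I. \<exists>p\<in>N. \<kappa> i p \<noteq> 0}"
proof -
  have o1: "\<forall>S\<in>U ` I. openin X S" using o by blast
  have c1: "topspace X \<subseteq> \<Union>(U ` I)" using cov by simp
  obtain \<V> where V1: "\<forall>V\<in>\<V>. openin X V" and V2: "topspace X \<subseteq> \<Union>\<V>"
     and V3: "\<forall>V\<in>\<V>. \<exists>S\<in>U ` I. V \<subseteq> S" and V4: "locally_finite_in X \<V>"
    by (rule paracompactD[OF P o1 c1])
  define sel where "sel V = (SOME i. i \<in> I \<and> V \<subseteq> U i)" for V
  have selI: "sel V \<in> I \<and> V \<subseteq> U (sel V)" if "V \<in> \<V>" for V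
  proof -
    have "\<exists>i. i \<in> I \<and> V \<subseteq> U i" using V3 that by blast
    then show ?thesis unfolding sel_def by (rule someI_ex)
  qed
  have R: "regular_space X" by (rule paracompact_regular[OF P])
  have N: "normal_space X" by (rule paracompact_normal[OF P])
  define \<W> where "\<W> = {W. openin X W \<and> (\<exists>V\<in>\<V>. X closure_of W \<subseteq> V)}"
  have o2: "\<forall>S\<in>\<W>. openin X S" unfolding \<W>_def by blast
  have c2: "topspace X \<subseteq> \<Union>\<W>"
  proof
    fix x assume x: "x \<in> topspace X"
    with V2 obtain V where V: "V \<in> \<V>" "x \<in> V" by (meson UnionE subsetD)
    have "closedin X (topspace X - V)" using V1 V by blast
    moreover have "x \<in> topspace X - (topspace X - V)" using x V by blast
    ultimately obtain W where W: "openin X W" "x \<in> W" "disjnt (topspace X - V) (X closure_of W)"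
      using R unfolding regular_space by blast
    have "X closure_of W \<subseteq> V" using W(3) closure_of_subset_topspace[of X W]
      by (auto simp: disjnt_def)
    then have "W \<in> \<W>" unfolding \<W>_def using W(1) V(1) by blast
    then show "x \<in> \<Union>\<W>" using W(2) by blast
  qed
  obtain \<Q> where Q1: "\<forall>V\<in>\<Q>. openin X V" and Q2: "topspace X \<subseteq> \<Union>\<Q>"
     and Q3: "\<forall>V\<in>\<Q>. \<exists>S\<in>\<W>. V \<subseteq> S" and Q4: "locally_finite_in X \<Q>"
    by (rule paracompactD[OF P o2 c2])
  have Qcl: "\<exists>V\<in>\<V>. X closure_of Q \<subseteq> V" if Q: "Q \<in> \<Q>" for Q
  proof -
    obtain S where S: "S \<in> \<W>" "Q \<subseteq> S" using Q3 Q by blast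
    then obtain V where "V \<in> \<V>" "X closure_of S \<subseteq> V" unfolding \<W>_def by blast
    then show ?thesis using closure_of_mono[OF S(2), of X] by blast
  qed
  define G where "G i = \<Union>{V\<in>\<V>. sel V = i}" for i
  define K where "K i = \<Union>((\<lambda>S. X closure_of S) ` {Q\<in>\<Q>. X closure_of Q \<subseteq> G i})" for i
  have Gopen: "openin X (G i)" for i unfolding G_def using V1 by (intro openin_Union) simp
  have GU: "G i \<subseteq> U i" if "i \<in> I" for i
    unfolding G_def using selI by blast
  have Kclosed: "closedin X (K i)" for i
  proof -
    have "locally_finite_in X {Q\<in>\<Q>. X closure_of Q \<subseteq> G i}"
      by (rule locally_finite_in_subset[OF Q4]) blast
    then show ?thesis unfolding K_def by (rule closedin_Union_locally_finite_closure)
  qed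
  have KG: "K i \<subseteq> G i" for i unfolding K_def by blast
  have Kcov: "topspace X \<subseteq> (\<Union>i\<in>I. K i)"
  proof
    fix x assume x: "x \<in> topspace X"
    with Q2 obtain Q where Q: "Q \<in> \<Q>" "x \<in> Q" by (meson UnionE subsetD)
    then obtain V where V: "V \<in> \<V>" "X closure_of Q \<subseteq> V" using Qcl by blast
    have "V \<subseteq> G (sel V)" unfolding G_def using V(1) by blast
    then have "X closure_of Q \<subseteq> G (sel V)" using V(2) by blast
    moreover have "x \<in> X closure_of Q"
      using Q Q1 closure_of_subset openin_subset by (metis subsetD)
    ultimately have "x \<in> K (sel V)" unfolding K_def using Q(1) by blast
    then show "x \<in> (\<Union>i\<in>I. K i)" using selI[OF V(1)] by blast
  qed
  have "\<forall>i\<in>I. \<exists>f. continuous_map X (top_of_set {0..1::real}) f \<and>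
           f ` (topspace X - G i) \<subseteq> {0} \<and> f ` K i \<subseteq> {1}"
  proof
    fix i assume "i \<in> I"
    have "closedin X (topspace X - G i)" using Gopen by blast
    moreover have "disjnt (topspace X - G i) (K i)" using KG by (auto simp: disjnt_def)
    ultimately show "\<exists>f. continuous_map X (top_of_set {0..1::real}) f \<and>
           f ` (topspace X - G i) \<subseteq> {0} \<and> f ` K i \<subseteq> {1}"
      using Urysohn_lemma[OF N _ Kclosed[of i], where a=0 and b=1 and S="topspace X - G i"] by (metis zero_le_one)
  qed
  then obtain u where u: "\<And>i. i\<in>I \<Longrightarrow> continuous_map X (top_of_set {0..1::real}) (u i)"
    "\<And>i. i\<in>I \<Longrightarrow> u i ` (topspace X - G i) \<subseteq> {0}" "\<And>i. i\<in>I \<Longrightarrow> u i ` K i \<subseteq> {1}"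
    by (metis bchoice)
  have ucont: "continuous_map X euclideanreal (u i)" if "i \<in> I" for i
    using u(1)[OF that] continuous_map_in_subtopology by blast
  have u0: "u i x = 0" if "i \<in> I" "x \<in> topspace X" "x \<notin> G i" for i x
    using u(2)[OF that(1)] that by blast
  have u1: "u i x = 1" if "i \<in> I" "x \<in> K i" for i x
    using u(3)[OF that(1)] that by blast
  define \<kappa> where "\<kappa> i x = max 0 (min 1 (3 * u i x - 1))" for i x
  define Ob where "Ob i = {x \<in> topspace X. u i x \<in> {2/3<..}}" for i
  show thesis
  proof (rule that[of \<kappa> Ob])
    show "continuous_map X euclideanreal (\<kappa> i)" if "i \<in> I" for i
      unfolding \<kappa>_def using ucont[OF that] by (intro continuous_intros) auto
    show "0 \<le> \<kappa> i x \<and> \<kappa> i x \<le> 1" for i x unfolding \<kappa>_def by auto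
    show "openin X (Ob i)" if "i \<in> I" for i
      unfolding Ob_def by (rule openin_continuous_map_preimage[OF ucont[OF that]]) simp
    show "\<kappa> i x = 1" if "i \<in> I" "x \<in> Ob i" for i x
      using that unfolding \<kappa>_def Ob_def by auto
    show "topspace X \<subseteq> (\<Union>i\<in>I. Ob i)"
    proof
      fix x assume x: "x \<in> topspace X"
      then obtain i where "i \<in> I" "x \<in> K i" using Kcov by blast
      then have "u i x = 1" using u1 by blast
      then show "x \<in> (\<Union>i\<in>I. Ob i)" unfolding Ob_def using x \<open>i \<in> I\<close> by (intro UN_I[of i]) auto
    qed
    show "\<exists>N. openin X N \<and> x\<in>N \<and> (\<forall>p\<in>N. \<kappa> i p = 0)"
      if "i\<in>I" "x \<in> topspace X" "x \<notin> U i" for i x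
    proof (intro exI conjI)
      show "openin X {p \<in> topspace X. u i p \<in> {..<1/3}}"
        by (rule openin_continuous_map_preimage[OF ucont[OF that(1)]]) simp
      have "x \<notin> G i" using GU[OF that(1)] that(3) by blast
      then show "x \<in> {p \<in> topspace X. u i p \<in> {..<1/3}}" using u0 that by auto
      show "\<forall>p\<in>{p \<in> topspace X. u i p \<in> {..<1/3}}. \<kappa> i p = 0"
        unfolding \<kappa>_def by auto
    qed
    show "\<exists>N. openin X N \<and> x \<in> N \<and> finite {i\<in>I. \<exists>p\<in>N. \<kappa> i p \<noteq> 0}"
      if x: "x \<in> topspace X" for x
    proof -
      obtain N where N: "openin X N" "x \<in> N" "finite {V \<in> \<V>. V \<inter> N \<noteq> {}}"
        using V4 x unfolding locally_finite_in_def by blast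
      have "{i\<in>I. \<exists>p\<in>N. \<kappa> i p \<noteq> 0} \<subseteq> sel ` {V \<in> \<V>. V \<inter> N \<noteq> {}}"
      proof
        fix i assume "i \<in> {i\<in>I. \<exists>p\<in>N. \<kappa> i p \<noteq> 0}"
        then obtain p where p: "i \<in> I" "p \<in> N" "\<kappa> i p \<noteq> 0" by blast
        have pX: "p \<in> topspace X" using N(1) p(2) openin_subset by blast
        have "u i p \<noteq> 0" using p(3) unfolding \<kappa>_def by auto
        then have "p \<in> G i" using u0[OF p(1) pX] by blast
        then obtain V where "V \<in> \<V>" "sel V = i" "p \<in> V" unfolding G_def by blast
        then show "i \<in> sel ` {V \<in> \<V>. V \<inter> N \<noteq> {}}" using p(2) by blast
      qed
      then have "finite {i\<in>I. \<exists>p\<in>N. \<kappa> i p \<noteq> 0}"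
        using N(3) finite_surj by blast
      then show ?thesis using N by blast
    qed
  qed
qed

lemma cont_local:
  assumes "\<And>x. x\<in>topspace X \<Longrightarrow> \<exists>M. openin X M \<and> x\<in>M \<and> continuous_map (subtopology X M) Y g"
  shows "continuous_map X Y g"
proof -
  define T where "T x = (SOME M. openin X M \<and> x\<in>M \<and> continuous_map (subtopology X M) Y g)" for x
  have T: "openin X (T x) \<and> x \<in> T x \<and> continuous_map (subtopology X (T x)) Y g" if "x \<in> topspace X" for x
    unfolding T_def using someI_ex[OF assms[OF that]] .
  show ?thesis
    by (rule pasting_lemma[where I="topspace X" and T=T and f="\<lambda>_. g"]) (use T in auto)
qed

lemma cont_Max_finite:
  fixes g :: "'i \<Rightarrow> 'a \<Rightarrow> real"
  assumes "finite F" "\<And>x. x\<in>F \<Longrightarrow> continuous_map X euclideanreal (g x)"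
  shows "continuous_map X euclideanreal (\<lambda>q. Max (insert 0 ((\<lambda>x. g x q) ` F)))"
  using assms
proof (induction F rule: finite_induct)
  case empty
  then show ?case by simp
next
  case (insert a F)
  have "continuous_map X euclideanreal (\<lambda>q. max (g a q) (Max (insert 0 ((\<lambda>x. g x q) ` F))))"
    using insert by (intro continuous_map_real_max) auto
  moreover have "Max (insert 0 ((\<lambda>x. g x q) ` insert a F)) = max (g a q) (Max (insert 0 ((\<lambda>x. g x q) ` F)))" for q
  proof -
    have "insert 0 ((\<lambda>x. g x q) ` insert a F) = insert (g a q) (insert 0 ((\<lambda>x. g x q) ` F))" by auto
    then show ?thesis using insert(1) by (simp del: Max_insert add: Max_insert[of "insert 0 _"])
  qed
  ultimately show ?case by simp
qed

lemma cont_minorant: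
  assumes P: "paracompact_space X"
    and loc: "\<And>x. x \<in> topspace X \<Longrightarrow> \<exists>N c. openin X N \<and> x \<in> N \<and> c > 0 \<and> (\<forall>p\<in>N. Q p c)"
    and down: "\<And>p c c'. Q p c \<Longrightarrow> 0 < c' \<Longrightarrow> c' \<le> c \<Longrightarrow> Q p c'"
  obtains b where "continuous_map X euclideanreal b" "\<And>p. p\<in>topspace X \<Longrightarrow> b p > 0 \<and> Q p (b p)"
proof -
  have "\<forall>x\<in>topspace X. \<exists>Nc. openin X (fst Nc) \<and> x \<in> fst Nc \<and> snd Nc > 0 \<and> (\<forall>p\<in>fst Nc. Q p (snd Nc))"
    using loc by force
  then obtain Nc where Nc: "\<And>x. x\<in>topspace X \<Longrightarrow> openin X (fst (Nc x)) \<and> x \<in> fst (Nc x) \<and> snd (Nc x) > 0 \<and> (\<forall>p\<in>fst (Nc x). Q p (snd (Nc x)))"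
    by (metis bchoice)
  define N where "N x = fst (Nc x)" for x
  define c where "c x = snd (Nc x)" for x
  have NcI: "openin X (N x)" "x \<in> N x" "c x > 0" "\<And>p. p \<in> N x \<Longrightarrow> Q p (c x)" if "x \<in> topspace X" for x
    using Nc[OF that] unfolding N_def c_def by auto
  have cov: "topspace X \<subseteq> (\<Union>x\<in>topspace X. N x)" using NcI by blast
  obtain \<kappa> :: "'a \<Rightarrow> 'a \<Rightarrow> real" and Ob where
    k1: "\<And>i. i\<in>topspace X \<Longrightarrow> continuous_map X euclideanreal (\<kappa> i)" and
    k2: "\<And>i x. 0 \<le> \<kappa> i x \<and> \<kappa> i x \<le> 1" and
    k3: "\<And>i. i\<in>topspace X \<Longrightarrow> openin X (Ob i)" and
    k4: "\<And>i x. i\<in>topspace X \<Longrightarrow> x \<in> Ob i \<Longrightarrow> \<kappa> i x = 1" and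
    k5: "topspace X \<subseteq> (\<Union>i\<in>topspace X. Ob i)" and
    k6: "\<And>i x. i\<in>topspace X \<Longrightarrow> x \<in> topspace X \<Longrightarrow> x \<notin> N i \<Longrightarrow> \<exists>M. openin X M \<and> x\<in>M \<and> (\<forall>p\<in>M. \<kappa> i p = 0)" and
    k7: "\<And>x. x \<in> topspace X \<Longrightarrow> \<exists>M. openin X M \<and> x \<in> M \<and> finite {i\<in>topspace X. \<exists>p\<in>M. \<kappa> i p \<noteq> 0}"
    by (rule PU[OF P, of "topspace X" N]) (use NcI cov in auto)
  define g where "g x q = \<kappa> x q * c x" for x q
  define b where "b q = Max (insert 0 ((\<lambda>x. g x q) ` {x\<in>topspace X. \<kappa> x q \<noteq> 0}))" for q
  have fin: "finite {x\<in>topspace X. \<kappa> x q \<noteq> 0}" if q: "q \<in> topspace X" for q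
  proof -
    obtain M where "openin X M" "q \<in> M" "finite {i\<in>topspace X. \<exists>p\<in>M. \<kappa> i p \<noteq> 0}" using k7[OF q] by blast
    then show ?thesis by (rule_tac finite_subset[OF _ \<open>finite _\<close>]) auto
  qed
  show thesis
  proof (rule that)
    show "continuous_map X euclideanreal b"
    proof (rule cont_local)
      fix x assume x: "x \<in> topspace X"
      obtain M where M: "openin X M" "x \<in> M" "finite {i\<in>topspace X. \<exists>p\<in>M. \<kappa> i p \<noteq> 0}" using k7[OF x] by blast
      define F where "F = {i\<in>topspace X. \<exists>p\<in>M. \<kappa> i p \<noteq> 0}"
      have "continuous_map X euclideanreal (\<lambda>q. Max (insert 0 ((\<lambda>x. g x q) ` F)))"
        using M(3) unfolding F_def g_def by (intro cont_Max_finite) (auto intro!: continuous_intros k1)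
      moreover have "b q = Max (insert 0 ((\<lambda>x. g x q) ` F))" if "q \<in> M" for q
      proof -
        have "insert 0 ((\<lambda>x. g x q) ` F) = insert 0 ((\<lambda>x. g x q) ` {x\<in>topspace X. \<kappa> x q \<noteq> 0})"
          using that unfolding F_def g_def by auto
        then show ?thesis unfolding b_def by simp
      qed
      ultimately have "continuous_map (subtopology X M) euclideanreal b"
        by (metis (no_types, lifting) continuous_map_from_subtopology continuous_map_eq topspace_subtopology IntD2)
      then show "\<exists>M. openin X M \<and> x \<in> M \<and> continuous_map (subtopology X M) euclideanreal b"
        using M by blast
    qed
    fix p assume p: "p \<in> topspace X"
    obtain i where i: "i \<in> topspace X" "p \<in> Ob i" using k5 p by blast
    have ki: "\<kappa> i p = 1" using k4[OF i] .
    let ?S = "insert 0 ((\<lambda>x. g x p) ` {x\<in>topspace X. \<kappa> x p \<noteq> 0})"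
    have finS: "finite ?S" using fin[OF p] by simp
    have "c i \<in> ?S" using ki i unfolding g_def by force
    then have "c i \<le> b p" unfolding b_def using finS by (rule_tac Max_ge) auto
    then show bpos: "b p > 0 \<and> Q p (b p)"
    proof -
      have bp: "b p > 0" using \<open>c i \<le> b p\<close> NcI(3)[OF i(1)] by linarith
      have "b p \<in> ?S" unfolding b_def using finS by (rule_tac Max_in) auto
      then obtain j where j: "j \<in> topspace X" "\<kappa> j p \<noteq> 0" "b p = g j p" using bp by auto
      have "p \<in> N j"
      proof (rule ccontr)
        assume "p \<notin> N j"
        then obtain M where "p \<in> M" "\<forall>q\<in>M. \<kappa> j q = 0" using k6[OF j(1) p] by blast
        then show False using j(2) by blast
      qed
      then have "Q p (c j)" using NcI(4)[OF j(1)] by blast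
      moreover have "b p \<le> c j" using j(3) k2[of j p] NcI(3)[OF j(1)] unfolding g_def
        by (simp add: mult_left_le_one_le)
      ultimately show ?thesis using down bp by blast
    qed
  qed
qed

definition UVh :: "'b::metric_space set \<Rightarrow> real \<Rightarrow> real \<Rightarrow> bool" where
  "UVh S d a \<longleftrightarrow> (\<exists>c. homotopic_with_canon (\<lambda>_. True) (Onbhd d S) (Onbhd a S) id (\<lambda>_. c))"

lemma Onbhd_self: "0 < e \<Longrightarrow> S \<subseteq> Onbhd e S"
  unfolding Onbhd_def by force

lemma Onbhd_mono: "e \<le> e' \<Longrightarrow> Onbhd e S \<subseteq> Onbhd e' S"
  unfolding Onbhd_def by force

lemma Onbhd_trans:
  assumes "S \<subseteq> Onbhd \<eta> T" shows "Onbhd e S \<subseteq> Onbhd (e + \<eta>) T"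
proof
  fix y assume "y \<in> Onbhd e S"
  then obtain q where q: "q \<in> S" "dist y q < e" unfolding Onbhd_def by blast
  then obtain t where t: "t \<in> T" "dist q t < \<eta>" using assms unfolding Onbhd_def by blast
  have "dist y t < e + \<eta>" using q t dist_triangle[of y t q] by linarith
  then show "y \<in> Onbhd (e + \<eta>) T" using t unfolding Onbhd_def by blast
qed

lemma UVh_mono:
  assumes "UVh S d a" "d' \<le> d" "a \<le> a'" shows "UVh S d' a'"
proof -
  obtain c where c: "homotopic_with_canon (\<lambda>_. True) (Onbhd d S) (Onbhd a S) id (\<lambda>_. c)"
    using assms(1) unfolding UVh_def by blast
  have "homotopic_with_canon (\<lambda>_. True) (Onbhd d' S) (Onbhd a' S) id (\<lambda>_. c)"
    by (rule homotopic_with_subset_right[OF homotopic_with_subset_left[OF c Onbhd_mono[OF assms(2)]] Onbhd_mono[OF assms(3)]])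
  then show ?thesis unfolding UVh_def by blast
qed

lemma UVh_transfer:
  assumes "S \<subseteq> Onbhd \<eta> T" "T \<subseteq> Onbhd \<eta> S" "UVh S d a" "d' + \<eta> \<le> d"
  shows "UVh T d' (a + \<eta>)"
proof -
  obtain c where c: "homotopic_with_canon (\<lambda>_. True) (Onbhd d S) (Onbhd a S) id (\<lambda>_. c)"
    using assms(3) unfolding UVh_def by blast
  have s1: "Onbhd d' T \<subseteq> Onbhd d S"
    using Onbhd_trans[OF assms(2), of d'] Onbhd_mono[OF assms(4), of S] by blast
  have s2: "Onbhd a S \<subseteq> Onbhd (a + \<eta>) T" by (rule Onbhd_trans[OF assms(1)])
  have "homotopic_with_canon (\<lambda>_. True) (Onbhd d' T) (Onbhd (a+\<eta>) T) id (\<lambda>_. c)"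
    by (rule homotopic_with_subset_right[OF homotopic_with_subset_left[OF c s1] s2])
  then show ?thesis unfolding UVh_def by blast
qed

lemma scale_step:
  fixes \<phi> :: "'a \<Rightarrow> 'b::metric_space set"
  assumes P: "paracompact_space X" and rc: "rho_continuous X \<phi>"
    and uv: "\<forall>x\<in>topspace X. uniformly_UV_infty (\<phi> x)"
    and ac: "continuous_map X euclideanreal a" and apos: "\<forall>p\<in>topspace X. a p > 0"
  obtains b where "continuous_map X euclideanreal b"
    "\<And>p. p\<in>topspace X \<Longrightarrow> 0 < b p \<and> b p \<le> a p \<and> UVh (\<phi> p) (b p) (a p)"
proof -
  define Q where "Q p c \<longleftrightarrow> c \<le> a p \<and> UVh (\<phi> p) c (a p)" for p c
  have down: "Q p c'" if "Q p c" "0 < c'" "c' \<le> c" for p c c'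
    using that UVh_mono[of "\<phi> p" c "a p" c' "a p"] unfolding Q_def by auto
  have loc: "\<exists>N c. openin X N \<and> x \<in> N \<and> c > 0 \<and> (\<forall>p\<in>N. Q p c)" if x: "x \<in> topspace X" for x
  proof -
    define e where "e = a x / 2"
    have epos: "e > 0" using apos x unfolding e_def by auto
    obtain \<delta> where d: "0 < \<delta>" "\<delta> \<le> e" "UVh (\<phi> x) \<delta> e"
      using uv x epos unfolding uniformly_UV_infty_def UVh_def by blast
    obtain V where V: "openin X V" "x \<in> V"
      "\<forall>p\<in>V. \<phi> x \<subseteq> Onbhd (\<delta>/2) (\<phi> p) \<and> \<phi> p \<subseteq> Onbhd (\<delta>/2) (\<phi> x)"
      using rc x d(1) unfolding rho_continuous_def by (meson half_gt_zero)
    define N where "N = V \<inter> {p \<in> topspace X. a p \<in> {3/4 * a x <..}}"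
    have No: "openin X N" unfolding N_def
      by (intro openin_Int V(1) openin_continuous_map_preimage[OF ac]) simp
    have xN: "x \<in> N" unfolding N_def using V(2) x apos by auto
    have "Q p (\<delta>/2)" if p: "p \<in> N" for p
    proof -
      have "UVh (\<phi> p) (\<delta>/2) (e + \<delta>/2)"
        by (rule UVh_transfer[of "\<phi> x" "\<delta>/2" "\<phi> p" \<delta> e]) (use V(3) p d N_def in auto)
      moreover have "e + \<delta>/2 \<le> a p" "\<delta>/2 \<le> a p" using p d unfolding N_def e_def by auto
      ultimately show ?thesis unfolding Q_def using UVh_mono by blast
    qed
    then show ?thesis using No xN d(1) by (intro exI[of _ N] exI[of _ "\<delta>/2"]) auto
  qed
  obtain b where b: "continuous_map X euclideanreal b" "\<And>p. p\<in>topspace X \<Longrightarrow> b p > 0 \<and> Q p (b p)"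
    by (rule cont_minorant[OF P loc down]) blast+
  show thesis by (rule that[OF b(1)]) (use b(2) in \<open>auto simp: Q_def\<close>)
qed

lemma scales:
  fixes \<phi> :: "'a \<Rightarrow> 'b::metric_space set"
  assumes P: "paracompact_space X" and rc: "rho_continuous X \<phi>"
    and uv: "\<forall>x\<in>topspace X. uniformly_UV_infty (\<phi> x)"
    and ec: "continuous_map X euclideanreal \<epsilon>" and epos: "\<forall>p\<in>topspace X. \<epsilon> p > 0"
  obtains a b :: "nat \<Rightarrow> 'a \<Rightarrow> real" where
    "\<And>n. continuous_map X euclideanreal (a n)" "\<And>n. continuous_map X euclideanreal (b n)"
    "\<And>n p. p\<in>topspace X \<Longrightarrow> 0 < b n p \<and> b n p \<le> a n p \<and> UVh (\<phi> p) (b n p) (a n p)"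
    "\<And>p. a 0 p = \<epsilon> p / 4" "\<And>n p. a (Suc n) p = b n p / 4"
proof -
  define good where "good a \<longleftrightarrow> continuous_map X euclideanreal a \<and> (\<forall>p\<in>topspace X. a p > 0)" for a :: "'a \<Rightarrow> real"
  define goodb where "goodb a b \<longleftrightarrow> continuous_map X euclideanreal b \<and>
     (\<forall>p\<in>topspace X. 0 < b p \<and> b p \<le> a p \<and> UVh (\<phi> p) (b p) (a p))" for a b :: "'a \<Rightarrow> real"
  define B where "B a = (SOME b. goodb a b)" for a
  have Bg: "goodb a (B a)" if ga: "good a" for a
  proof -
    obtain b where "continuous_map X euclideanreal b"
       "\<And>p. p\<in>topspace X \<Longrightarrow> 0 < b p \<and> b p \<le> a p \<and> UVh (\<phi> p) (b p) (a p)"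
      using scale_step[OF P rc uv] ga unfolding good_def by blast
    then have "goodb a b" unfolding goodb_def by blast
    then show ?thesis unfolding B_def by (rule someI[where P="goodb a"])
  qed
  define A where "A n = rec_nat (\<lambda>p. \<epsilon> p / 4) (\<lambda>n a p. B a p / 4) n" for n
  have A0: "A 0 = (\<lambda>p. \<epsilon> p / 4)" and AS: "A (Suc n) = (\<lambda>p. B (A n) p / 4)" for n
    unfolding A_def by simp_all
  have gA: "good (A n)" for n
  proof (induction n)
    case 0 then show ?case unfolding good_def A0 using ec epos by (auto intro: continuous_intros)
  next
    case (Suc n)
    then have "goodb (A n) (B (A n))" by (rule Bg)
    then show ?case unfolding good_def goodb_def AS by (auto intro: continuous_intros)
  qed
  show thesis
  proof (rule that[of A "\<lambda>n. B (A n)"])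
    show "continuous_map X euclideanreal (A n)" for n using gA unfolding good_def by blast
    show "continuous_map X euclideanreal (B (A n))" for n using Bg[OF gA] unfolding goodb_def by blast
    show "0 < B (A n) p \<and> B (A n) p \<le> A n p \<and> UVh (\<phi> p) (B (A n) p) (A n p)" if "p \<in> topspace X" for n p
      using Bg[OF gA] that unfolding goodb_def by blast
  qed (simp_all add: A0 AS)
qed

fun chainf :: "(nat \<Rightarrow> 'a \<Rightarrow> 'b) \<Rightarrow> (nat \<Rightarrow> 'a \<Rightarrow> 'b \<Rightarrow> 'b) \<Rightarrow> nat \<Rightarrow> nat \<Rightarrow> 'a \<Rightarrow> 'b" where
  "chainf c G m 0 p = c m p"
| "chainf c G m (Suc d) p = G (m - Suc d) p (chainf c G m d p)"

lemma C_spaceD: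
  assumes "C_space X" "\<And>n. (\<forall>U\<in>\<U> n. openin X U) \<and> topspace X \<subseteq> \<Union>(\<U> n)"
  obtains \<V> :: "nat \<Rightarrow> 'a set set" where
    "\<And>n V. V \<in> \<V> n \<Longrightarrow> openin X V" "\<And>n. pairwise disjnt (\<V> n)"
    "\<And>n V. V \<in> \<V> n \<Longrightarrow> \<exists>U\<in>\<U> n. V \<subseteq> U" "topspace X \<subseteq> (\<Union>n. \<Union>(\<V> n))"
proof -
  have "(\<forall>n. (\<forall>U\<in>\<U> n. openin X U) \<and> topspace X \<subseteq> \<Union>(\<U> n)) \<longrightarrow>
        (\<exists>\<V> :: nat \<Rightarrow> 'a set set.
           (\<forall>n. (\<forall>V\<in>\<V> n. openin X V) \<and> pairwise disjnt (\<V> n) \<and>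
                (\<forall>V\<in>\<V> n. \<exists>U\<in>\<U> n. V \<subseteq> U)) \<and>
           topspace X \<subseteq> (\<Union>n. \<Union>(\<V> n)))"
    using assms(1) unfolding C_space_def by (rule spec)
  moreover have "\<forall>n. (\<forall>U\<in>\<U> n. openin X U) \<and> topspace X \<subseteq> \<Union>(\<U> n)" using assms(2) by blast
  ultimately have "\<exists>\<V> :: nat \<Rightarrow> 'a set set.
           (\<forall>n. (\<forall>V\<in>\<V> n. openin X V) \<and> pairwise disjnt (\<V> n) \<and>
                (\<forall>V\<in>\<V> n. \<exists>U\<in>\<U> n. V \<subseteq> U)) \<and>
           topspace X \<subseteq> (\<Union>n. \<Union>(\<V> n))" by (rule mp)
  then obtain \<V> :: "nat \<Rightarrow> 'a set set" where
    "\<forall>n. (\<forall>V\<in>\<V> n. openin X V) \<and> pairwise disjnt (\<V> n) \<and> (\<forall>V\<in>\<V> n. \<exists>U\<in>\<U> n. V \<subseteq> U)"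
    "topspace X \<subseteq> (\<Union>n. \<Union>(\<V> n))" by (elim exE conjE)
  then show ?thesis using that by metis
qed

theorem theorem4p1:
  fixes X :: "'a topology" and \<phi> :: "'a \<Rightarrow> 'b::metric_space set"
  assumes "paracompact_space X" and "C_space X"
    and "\<forall>x\<in>topspace X. \<phi> x \<noteq> {}"
    and "rho_continuous X \<phi>"
    and "\<forall>x\<in>topspace X. uniformly_UV_infty (\<phi> x)"
    and "continuous_map X euclideanreal \<epsilon>" and "\<forall>x\<in>topspace X. \<epsilon> x > 0"
  shows "\<exists>f. continuous_map X euclidean f \<and> eps_selection X \<epsilon> \<phi> f"
proof -
  note P = assms(1) and CS = assms(2) and ne = assms(3) and rc = assms(4) and uv = assms(5)
    and ec = assms(6) and epos = assms(7)
  obtain a b :: "nat \<Rightarrow> 'a \<Rightarrow> real" where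
    ac: "\<And>n. continuous_map X euclideanreal (a n)" and bc: "\<And>n. continuous_map X euclideanreal (b n)"
    and ab: "\<And>n p. p\<in>topspace X \<Longrightarrow> 0 < b n p \<and> b n p \<le> a n p \<and> UVh (\<phi> p) (b n p) (a n p)"
    and a0: "\<And>p. a 0 p = \<epsilon> p / 4" and aS: "\<And>n p. a (Suc n) p = b n p / 4"
    by (rule scales[OF P rc uv ec epos]) blast
  define cond where "cond n z p \<longleftrightarrow> \<phi> z \<subseteq> Onbhd (b n z / 4) (\<phi> p) \<and> \<phi> p \<subseteq> Onbhd (b n z / 4) (\<phi> z)
      \<and> 3/4 * a n z < a n p \<and> b n p < 3/2 * b n z" for n z p
  define \<U> where "\<U> n = {N. openin X N \<and> (\<exists>z\<in>topspace X. \<forall>p\<in>N. cond n z p)}" for n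
  have Ucov: "(\<forall>U\<in>\<U> n. openin X U) \<and> topspace X \<subseteq> \<Union>(\<U> n)" for n
  proof
    show "\<forall>U\<in>\<U> n. openin X U" unfolding \<U>_def by blast
    show "topspace X \<subseteq> \<Union>(\<U> n)"
    proof
      fix x assume x: "x \<in> topspace X"
      have bx: "b n x / 4 > 0" "a n x > 0" using ab[OF x, of n] by auto
      obtain V where V: "openin X V" "x \<in> V"
        "\<forall>p\<in>V. \<phi> x \<subseteq> Onbhd (b n x / 4) (\<phi> p) \<and> \<phi> p \<subseteq> Onbhd (b n x / 4) (\<phi> x)"
        using rc x bx(1) unfolding rho_continuous_def by meson
      define N where "N = V \<inter> {p \<in> topspace X. a n p \<in> {3/4 * a n x <..}} \<inter> {p \<in> topspace X. b n p \<in> {..< 3/2 * b n x}}"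
      have No: "openin X N" unfolding N_def
        by (intro openin_Int V(1) openin_continuous_map_preimage[OF ac] openin_continuous_map_preimage[OF bc]) simp_all
      have xN: "x \<in> N" unfolding N_def using V(2) x bx by auto
      have "\<forall>p\<in>N. cond n x p" unfolding N_def cond_def using V(3) by auto
      then have "N \<in> \<U> n" unfolding \<U>_def using No x by blast
      then show "x \<in> \<Union>(\<U> n)" using xN by blast
    qed
  qed
  obtain \<V> :: "nat \<Rightarrow> 'a set set" where
    V1: "\<And>n V. V \<in> \<V> n \<Longrightarrow> openin X V" and V2: "\<And>n. pairwise disjnt (\<V> n)"
    and V3: "\<And>n V. V \<in> \<V> n \<Longrightarrow> \<exists>U\<in>\<U> n. V \<subseteq> U" and V4: "topspace X \<subseteq> (\<Union>n. \<Union>(\<V> n))"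
    by (rule C_spaceD[where \<U>=\<U>, OF CS Ucov]) blast
  define zc where "zc n V = (SOME z. z \<in> topspace X \<and> (\<forall>p\<in>V. cond n z p))" for n V
  have zcI: "zc n V \<in> topspace X \<and> (\<forall>p\<in>V. cond n (zc n V) p)" if V: "V \<in> \<V> n" for n V
  proof -
    obtain U where "U \<in> \<U> n" "V \<subseteq> U" using V3[OF V] by blast
    then have "\<exists>z. z \<in> topspace X \<and> (\<forall>p\<in>V. cond n z p)" unfolding \<U>_def by blast
    then show ?thesis unfolding zc_def by (rule someI_ex)
  qed
  define W where "W n = \<Union>(\<V> n)" for n
  define Vof where "Vof n p = (SOME V. V \<in> \<V> n \<and> p \<in> V)" for n p
  have Vof: "Vof n p = V" if "V \<in> \<V> n" "p \<in> V" for n p V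
    unfolding Vof_def
  proof (rule some_equality)
    show "V \<in> \<V> n \<and> p \<in> V" using that by blast
    fix V' assume "V' \<in> \<V> n \<and> p \<in> V'"
    then show "V' = V" using V2[of n] that unfolding pairwise_def disjnt_def by blast
  qed
  define z where "z n p = zc n (Vof n p)" for n p
  have zW: "z n p \<in> topspace X \<and> cond n (z n p) p" if pW: "p \<in> W n" for n p
  proof -
    obtain V where V: "V \<in> \<V> n" "p \<in> V" using pW unfolding W_def by blast
    then show ?thesis unfolding z_def Vof[OF V] using zcI[OF V(1)] by blast
  qed
  have Wo: "openin X (W n)" for n unfolding W_def using V1 by (intro openin_Union) blast
  have Wc: "topspace X \<subseteq> (\<Union>n\<in>UNIV. W n)" using V4 unfolding W_def by blast
  obtain \<kappa> :: "nat \<Rightarrow> 'a \<Rightarrow> real" and Ob where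
    k1: "\<And>i. continuous_map X euclideanreal (\<kappa> i)" and
    k2: "\<And>i x. 0 \<le> \<kappa> i x \<and> \<kappa> i x \<le> 1" and
    k3: "\<And>i. openin X (Ob i)" and
    k4: "\<And>i x. x \<in> Ob i \<Longrightarrow> \<kappa> i x = 1" and
    k5: "topspace X \<subseteq> (\<Union>i. Ob i)" and
    k6: "\<And>i x. x \<in> topspace X \<Longrightarrow> x \<notin> W i \<Longrightarrow> \<exists>N. openin X N \<and> x\<in>N \<and> (\<forall>p\<in>N. \<kappa> i p = 0)"
    by (rule PU[OF P, of UNIV W]) (use Wo Wc in auto)
  have kW: "p \<in> W n" if "p \<in> topspace X" "\<kappa> n p \<noteq> 0" for n p
  proof (rule ccontr)
    assume "p \<notin> W n"
    then obtain N where "p \<in> N" "\<forall>q\<in>N. \<kappa> n q = 0" using k6 \<open>p \<in> topspace X\<close> by blast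
    then show False using \<open>\<kappa> n p \<noteq> 0\<close> by blast
  qed
  define Hgood where "Hgood n y h \<longleftrightarrow> continuous_on ({0..1} \<times> Onbhd (b n y) (\<phi> y)) h \<and>
      h ` ({0..1} \<times> Onbhd (b n y) (\<phi> y)) \<subseteq> Onbhd (a n y) (\<phi> y) \<and>
      (\<forall>w. h (0, w) = w) \<and> (\<forall>w. h (1, w) = h (1, undefined))" for n y and h :: "real \<times> 'b \<Rightarrow> 'b"
  have Hex: "\<exists>h. Hgood n y h" if y: "y \<in> topspace X" for n y
  proof -
    obtain c where "homotopic_with_canon (\<lambda>_. True) (Onbhd (b n y) (\<phi> y)) (Onbhd (a n y) (\<phi> y)) id (\<lambda>_. c)"
      using ab[OF y, of n] unfolding UVh_def by blast
    then obtain h where h: "continuous_map (prod_topology (top_of_set {0..1::real}) (top_of_set (Onbhd (b n y) (\<phi> y)))) (top_of_set (Onbhd (a n y) (\<phi> y))) h"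
      "\<forall>w. h (0, w) = id w" "\<forall>w. h (1, w) = c"
      unfolding homotopic_with_def by blast
    have "continuous_on ({0..1} \<times> Onbhd (b n y) (\<phi> y)) h \<and>
      h ` ({0..1} \<times> Onbhd (b n y) (\<phi> y)) \<subseteq> Onbhd (a n y) (\<phi> y)"
      using h(1) by (simp add: continuous_map_in_subtopology image_subset_iff_funcset)
    then have "Hgood n y h" unfolding Hgood_def using h(2,3) by simp
    then show ?thesis by blast
  qed
  define H where "H n y = (SOME h. Hgood n y h)" for n y
  have HI: "Hgood n y (H n y)" if "y \<in> topspace X" for n y
    unfolding H_def using Hex[OF that] by (rule someI_ex)
  define cst where "cst n y = H n y (1, undefined)" for n y
  define cc where "cc m p = cst m (z m p)" for m p
  define G where "G n p w = (if \<kappa> n p = 0 then w else H n (z n p) (\<kappa> n p, w))" for n p w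
  let ?ch = "chainf cc G"
  have aSle: "a (Suc k) p \<le> a k p" if "p \<in> topspace X" for k p
    using ab[OF that, of k] aS[of k p] by auto
  have Dom: "w \<in> Onbhd (b k (z k p)) (\<phi> (z k p))"
    if p: "p \<in> topspace X" "p \<in> W k" and w: "w \<in> Onbhd (2 * a (Suc k) p) (\<phi> p)" for k p w
  proof -
    define y where "y = z k p"
    have y: "y \<in> topspace X" "cond k y p" using zW[OF p(2)] unfolding y_def by auto
    have "w \<in> Onbhd (2 * a (Suc k) p + b k y / 4) (\<phi> y)"
      using Onbhd_trans[of "\<phi> p" "b k y / 4" "\<phi> y"] y(2) w unfolding cond_def by blast
    moreover have "2 * a (Suc k) p + b k y / 4 \<le> b k y"
      using y(2) aS[of k p] unfolding cond_def by auto
    ultimately show ?thesis using Onbhd_mono unfolding y_def by blast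
  qed
  have Rng: "w \<in> Onbhd (2 * a k p) (\<phi> p)"
    if p: "p \<in> topspace X" "p \<in> W k" and w: "w \<in> Onbhd (a k (z k p)) (\<phi> (z k p))" for k p w
  proof -
    define y where "y = z k p"
    have y: "y \<in> topspace X" "cond k y p" using zW[OF p(2)] unfolding y_def by auto
    have "w \<in> Onbhd (a k y + b k y / 4) (\<phi> p)"
      using Onbhd_trans[of "\<phi> y" "b k y / 4" "\<phi> p"] y(2) w unfolding cond_def y_def by blast
    moreover have "a k y + b k y / 4 \<le> 2 * a k p"
      using y(2) ab[OF y(1), of k] ab[OF p(1), of k] unfolding cond_def by auto
    ultimately show ?thesis using Onbhd_mono by blast
  qed
  have Hmap: "H k y (t, w) \<in> Onbhd (a k y) (\<phi> y)"
    if "y \<in> topspace X" "t \<in> {0..1}" "w \<in> Onbhd (b k y) (\<phi> y)" for k y t w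
    using HI[OF that(1), of k] that(2,3) unfolding Hgood_def by blast
  have H0: "H k y (0, w) = w" if "y \<in> topspace X" for k y w
    using HI[OF that, of k] unfolding Hgood_def by blast
  have H1: "H k y (1, w) = cst k y" if "y \<in> topspace X" for k y w
    using HI[OF that, of k] unfolding Hgood_def cst_def by blast
  have Inv: "?ch m d p \<in> Onbhd (2 * a (m - d) p) (\<phi> p)"
    if p: "p \<in> topspace X" and km: "\<kappa> m p = 1" and dm: "d \<le> m" for m p d
    using dm
  proof (induction d)
    case 0
    have pW: "p \<in> W m" using kW[OF p] km by simp
    define y where "y = z m p"
    have y: "y \<in> topspace X" using zW[OF pW] unfolding y_def by auto
    obtain q where q: "q \<in> \<phi> y" using ne y by blast
    have "q \<in> Onbhd (b m y) (\<phi> y)" using Onbhd_self[of "b m y" "\<phi> y"] ab[OF y, of m] q by blast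
    then have "H m y (1, q) \<in> Onbhd (a m y) (\<phi> y)" using Hmap[OF y] by simp
    then have "cst m y \<in> Onbhd (a m y) (\<phi> y)" using H1[OF y] by simp
    then show ?case using Rng[OF p pW] unfolding cc_def y_def by simp
  next
    case (Suc d)
    define k where "k = m - Suc d"
    have mk: "m - d = Suc k" using Suc(2) unfolding k_def by simp
    have IH: "?ch m d p \<in> Onbhd (2 * a (Suc k) p) (\<phi> p)" using Suc mk by simp
    have eq: "?ch m (Suc d) p = G k p (?ch m d p)" unfolding k_def by simp
    show ?case
    proof (cases "\<kappa> k p = 0")
      case True
      then have "?ch m (Suc d) p = ?ch m d p" using eq unfolding G_def by simp
      moreover have "2 * a (Suc k) p \<le> 2 * a k p" using aSle[OF p] by simp
      ultimately show ?thesis using IH Onbhd_mono unfolding k_def by (metis subsetD)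
    next
      case False
      have pW: "p \<in> W k" using kW[OF p False] .
      define y where "y = z k p"
      have y: "y \<in> topspace X" using zW[OF pW] unfolding y_def by auto
      have "?ch m d p \<in> Onbhd (b k y) (\<phi> y)" using Dom[OF p pW IH] unfolding y_def .
      then have "H k y (\<kappa> k p, ?ch m d p) \<in> Onbhd (a k y) (\<phi> y)"
        using Hmap[OF y] k2[of k p] by simp
      then have "?ch m (Suc d) p \<in> Onbhd (a k y) (\<phi> y)" using eq False unfolding G_def y_def by simp
      then show ?thesis using Rng[OF p pW] unfolding y_def k_def by simp
    qed
  qed
  have Stab0: "?ch m (m - n) p = ?ch n 0 p" if kn: "\<kappa> n p = 1" and nm: "n \<le> m" and p: "p \<in> topspace X" for m n p
  proof (cases "n = m")
    case True then show ?thesis by simp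
  next
    case False
    then obtain e where e: "m - n = Suc e" using nm by (metis Suc_diff_Suc le_neq_implies_less)
    have mn: "m - Suc e = n" using e nm by simp
    have pW: "p \<in> W n" using kW[OF p] kn by simp
    have y: "z n p \<in> topspace X" using zW[OF pW] by blast
    have "?ch m (m - n) p = G n p (?ch m e p)" using e mn by simp
    also have "\<dots> = cst n (z n p)" unfolding G_def using kn H1[OF y] by simp
    finally show ?thesis unfolding cc_def by simp
  qed
  have Stab: "?ch m m p = ?ch n n p" if kn: "\<kappa> n p = 1" and nm: "n \<le> m" and p: "p \<in> topspace X" for m n p
  proof -
    have "?ch m (m - n + j) p = ?ch n j p" if "j \<le> n" for j
      using that
    proof (induction j)
      case 0 then show ?case using Stab0[OF kn nm p] by simp
    next
      case (Suc j)
      have "m - (m - n + Suc j) = n - Suc j" using Suc(2) nm by simp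
      then show ?case using Suc by simp
    qed
    from this[of n] show ?thesis using nm by simp
  qed
  define L where "L p = (LEAST m. \<kappa> m p = 1)" for p
  define f where "f p = ?ch (L p) (L p) p" for p
  have fn: "f p = ?ch n n p" if kn: "\<kappa> n p = 1" and p: "p \<in> topspace X" for n p
  proof -
    have "\<kappa> (L p) p = 1" "L p \<le> n" unfolding L_def using kn by (auto intro: LeastI Least_le)
    then show ?thesis unfolding f_def using Stab[OF _ _ p] by metis
  qed
  have exk: "\<exists>n. \<kappa> n p = 1" if "p \<in> topspace X" for p
    using k5 k4 that by blast
  have sel: "eps_selection X \<epsilon> \<phi> f"
    unfolding eps_selection_def
  proof
    fix p assume p: "p \<in> topspace X"
    obtain n where kn: "\<kappa> n p = 1" using exk[OF p] by blast
    have "f p \<in> Onbhd (2 * a (n - n) p) (\<phi> p)" unfolding fn[OF kn p] by (rule Inv[OF p kn]) simp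
    moreover have "2 * a (n - n) p \<le> \<epsilon> p" using a0[of p] epos[rule_format, OF p] by simp
    ultimately show "f p \<in> Onbhd (\<epsilon> p) (\<phi> p)" using Onbhd_mono by blast
  qed
  have cont: "continuous_map X euclidean f"
  proof (rule cont_local)
    fix x assume x: "x \<in> topspace X"
    obtain n where xn: "x \<in> Ob n" using k5 x by blast
    define M where "M k = (if x \<in> W k then Vof k x else (SOME N. openin X N \<and> x \<in> N \<and> (\<forall>p\<in>N. \<kappa> k p = 0)))" for k
    have M1: "openin X (M k) \<and> x \<in> M k" for k
    proof (cases "x \<in> W k")
      case True
      then obtain V where V: "V \<in> \<V> k" "x \<in> V" unfolding W_def by blast
      then show ?thesis unfolding M_def using True Vof[OF V] V1[OF V(1)] by simp
    next
      case False
      have "\<exists>N. openin X N \<and> x \<in> N \<and> (\<forall>p\<in>N. \<kappa> k p = 0)" using k6[OF x False] .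
      then have "openin X (SOME N. openin X N \<and> x \<in> N \<and> (\<forall>p\<in>N. \<kappa> k p = 0)) \<and> x \<in> (SOME N. openin X N \<and> x \<in> N \<and> (\<forall>p\<in>N. \<kappa> k p = 0))"
        by (rule someI2_ex) blast
      then show ?thesis unfolding M_def using False by simp
    qed
    have M2: "M k \<in> \<V> k \<and> (\<forall>p\<in>M k. Vof k p = M k)" if "x \<in> W k" for k
    proof -
      obtain V where V: "V \<in> \<V> k" "x \<in> V" using \<open>x \<in> W k\<close> unfolding W_def by blast
      then show ?thesis unfolding M_def using \<open>x \<in> W k\<close> Vof[OF V] Vof[OF V(1)] by simp
    qed
    have M3: "\<forall>p\<in>M k. \<kappa> k p = 0" if "x \<notin> W k" for k
    proof -
      have "\<exists>N. openin X N \<and> x \<in> N \<and> (\<forall>p\<in>N. \<kappa> k p = 0)" using k6[OF x \<open>x \<notin> W k\<close>] .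
      then have "\<forall>p\<in>(SOME N. openin X N \<and> x \<in> N \<and> (\<forall>p\<in>N. \<kappa> k p = 0)). \<kappa> k p = 0"
        by (rule someI2_ex) blast
      then show ?thesis unfolding M_def using \<open>x \<notin> W k\<close> by simp
    qed
    define MM where "MM = Ob n \<inter> (\<Inter>k\<in>{..n}. M k)"
    have MMo: "openin X MM" unfolding MM_def using k3 M1 by (intro openin_Int openin_INT2) auto
    have xMM: "x \<in> MM" unfolding MM_def using xn M1 by auto
    have MMX: "p \<in> topspace X" if "p \<in> MM" for p using MMo that openin_subset by blast
    have MMk: "p \<in> M k" if "p \<in> MM" "k \<le> n" for p k using that unfolding MM_def by auto
    have MMn: "\<kappa> n p = 1" if "p \<in> MM" for p using that k4 unfolding MM_def by blast
    have chc: "continuous_map (subtopology X MM) euclidean (?ch n d)" if "d \<le> n" for d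
      using that
    proof (induction d)
      case 0
      have xW: "x \<in> W n" using kW[OF x] k4[OF xn] by simp
      have "?ch n 0 p = cst n (zc n (M n))" if "p \<in> MM" for p
        using M2[OF xW] MMk[OF that, of n] unfolding cc_def z_def by simp
      then show ?case
        by (intro continuous_map_eq[OF continuous_map_const[THEN iffD2]]) auto
    next
      case (Suc d)
      define k where "k = n - Suc d"
      have kn: "k \<le> n" unfolding k_def by simp
      have nk: "n - d = Suc k" using Suc(2) unfolding k_def by simp
      have IH: "continuous_map (subtopology X MM) euclidean (?ch n d)" using Suc by simp
      have eq: "?ch n (Suc d) p = G k p (?ch n d p)" for p unfolding k_def by simp
      show ?case
      proof (cases "x \<in> W k")
        case False
        have "?ch n (Suc d) p = ?ch n d p" if "p \<in> MM" for p
          using eq M3[OF False] MMk[OF that kn] unfolding G_def by simp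
        then show ?thesis using IH by (metis continuous_map_eq topspace_subtopology IntD2)
      next
        case True
        define y where "y = zc k (M k)"
        have Mk: "M k \<in> \<V> k" "\<forall>p\<in>M k. Vof k p = M k" using M2[OF True] by auto
        have yX: "y \<in> topspace X" using zcI[OF Mk(1)] unfolding y_def by blast
        have zk: "z k p = y" if "p \<in> MM" for p using Mk MMk[OF that kn] unfolding z_def y_def by simp
        have pWk: "p \<in> W k" if "p \<in> MM" for p using Mk MMk[OF that kn] unfolding W_def by blast
        define D where "D = {0..1::real} \<times> Onbhd (b k y) (\<phi> y)"
        have Hc: "continuous_map (top_of_set D) euclidean (H k y)"
          using HI[OF yX, of k] unfolding Hgood_def D_def by simp
        have gc1: "continuous_map (subtopology X MM) euclidean (\<lambda>p. (\<kappa> k p, ?ch n d p))"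
          using continuous_map_pairedI[OF continuous_map_from_subtopology[OF k1[of k]] IH] by simp
        have gc2: "(\<kappa> k p, ?ch n d p) \<in> D" if pM: "p \<in> MM" for p
        proof -
          have "?ch n d p \<in> Onbhd (2 * a (Suc k) p) (\<phi> p)"
            using Inv[OF MMX[OF pM] MMn[OF pM] Suc.prems[THEN Suc_leD]] nk by simp
          then have "?ch n d p \<in> Onbhd (b k y) (\<phi> y)"
            using Dom[OF MMX[OF pM] pWk[OF pM]] zk[OF pM] by simp
          then show ?thesis unfolding D_def using k2[of k p] by simp
        qed
        have gc: "continuous_map (subtopology X MM) (top_of_set D) (\<lambda>p. (\<kappa> k p, ?ch n d p))"
          unfolding continuous_map_in_subtopology using gc1 gc2 by auto
        have cmp: "continuous_map (subtopology X MM) euclidean (H k y \<circ> (\<lambda>p. (\<kappa> k p, ?ch n d p)))"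
          by (rule continuous_map_compose[OF gc Hc])
        have eq2: "(H k y \<circ> (\<lambda>p. (\<kappa> k p, ?ch n d p))) p = ?ch n (Suc d) p" if "p \<in> MM" for p
          using eq[of p] zk[OF that] H0[OF yX] unfolding G_def by simp
        show ?thesis
        proof (rule continuous_map_eq[OF cmp])
          fix p assume "p \<in> topspace (subtopology X MM)"
          then show "(H k y \<circ> (\<lambda>p. (\<kappa> k p, ?ch n d p))) p = ?ch n (Suc d) p" using eq2 by simp
        qed
      qed
    qed
    have "f p = ?ch n n p" if "p \<in> MM" for p using fn[OF MMn[OF that] MMX[OF that]] .
    then have "continuous_map (subtopology X MM) euclidean f"
      using chc[of n] by (metis continuous_map_eq topspace_subtopology IntD2 order_refl)
    then show "\<exists>M. openin X M \<and> x \<in> M \<and> continuous_map (subtopology X M) euclidean f"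
      using MMo xMM by blast
  qed
  show ?thesis using cont sel by blast
qed

end
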